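(* Let $\mathcal{H}^-_{A_{n-1}}$ be the degenerate spin affine Hecke algebra of type $A_{n-1}$. Let $\gamma=(\gamma_1,\dots,\gamma_\ell)$ be a composition of $n$ with $n-\ell$ even, and let $\mu$ be the partition of $n$ obtained by reordering the parts of $\gamma$. If $\mu$ has an even part, then $t_\gamma\in[\mathcal{H}^-_{A_{n-1}},\mathcal{H}^-_{A_{n-1}}]$; if all parts of $\mu$ are odd, then $t_\gamma-\epsilon t_\mu\in[\mathcal{H}^-_{A_{n-1}},\mathcal{H}^-_{A_{n-1}}]$ for some $\epsilon\in\{1,-1\}$.
   Context: $\mathbb{C}S_n^-$ is generated by $t_1,\dots,t_{n-1}$ with $t_i^2=1$, $t_it_{i+1}t_i=t_{i+1}t_it_{i+1}$, $(t_it_j)^2=-1$ for $|i-j|>1$. $\mathcal{H}^-_{A_{n-1}}$ is generated by $b_1,\dots,b_n$ (with $b_ib_j=-b_jb_i$ for $i\ne j$) and $\mathbb{C}S_n^-$, subject to $t_ib_i+b_{i+1}t_i=1$ and $t_jb_i+b_it_j=0$ ($i\ne j,j+1$). $[H,H]$ is the linear span of all $hh'-h'h$. For a composition $\gamma$ (sequence of positive integers summing to $n$; a partition is a weakly decreasing one), $t_\gamma=T_1T_2\cdots T_\ell$ where, with $a_k=\gamma_1+\dots+\gamma_{k-1}$, $T_k=t_{a_k+1}t_{a_k+2}\cdots t_{a_k+\gamma_k-1}$ (empty product $1$ if $\gamma_k=1$); thus $t_\gamma$ is a product of $n-\ell$ generators. $t_\mu$ is defined in the same way for the composition $\mu$.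 *)

theory Defs
  imports Complex_Main "HOL-Library.Poly_Mapping" "HOL-Library.Multiset"
begin

(* Generators of the degenerate spin affine Hecke algebra H^-_{A_{n-1}}:
   T i  stands for t_i  (1 <= i <= n-1),  B i stands for b_i (1 <= i <= n). *)
datatype gen = T nat | B nat

definition gens :: "nat \<Rightarrow> gen set" where
  "gens n = {T i | i. 1 \<le> i \<and> i \<le> n - 1} \<union> {B i | i. 1 \<le> i \<and> i \<le> n}"

(* Free associative C-algebra on the generators: finitely supported
   complex-valued functions on words. *)
type_synonym fa = "gen list \<Rightarrow>\<^sub>0 complex"

definition wd :: "gen list \<Rightarrow> fa" where
  "wd w = Poly_Mapping.single w 1"

definition fmul :: "fa \<Rightarrow> fa \<Rightarrow> fa" where
  "fmul p q = (\<Sum>u\<in>Poly_Mapping.keys p. \<Sum>v\<in>Poly_Mapping.keys q.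
       Poly_Mapping.single (u @ v) (Poly_Mapping.lookup p u * Poly_Mapping.lookup q v))"

definition fscale :: "complex \<Rightarrow> fa \<Rightarrow> fa" where
  "fscale c p = Poly_Mapping.map (\<lambda>x. c * x) p"

definition free_alg :: "nat \<Rightarrow> fa set" where
  "free_alg n = {p. \<forall>w\<in>Poly_Mapping.keys p. set w \<subseteq> gens n}"

definition relators :: "nat \<Rightarrow> fa set" where
  "relators n =
     {wd [T i, T i] - wd [] | i. 1 \<le> i \<and> i \<le> n - 1}
   \<union> {wd [T i, T (i+1), T i] - wd [T (i+1), T i, T (i+1)] | i. 1 \<le> i \<and> i + 1 \<le> n - 1}
   \<union> {wd [T i, T j, T i, T j] + wd [] | i j. 1 \<le> i \<and> i \<le> n - 1 \<and> 1 \<le> j \<and> j \<le> n - 1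
                                        \<and> (i > j + 1 \<or> j > i + 1)}
   \<union> {wd [B i, B j] + wd [B j, B i] | i j. 1 \<le> i \<and> i \<le> n \<and> 1 \<le> j \<and> j \<le> n \<and> i \<noteq> j}
   \<union> {wd [T i, B i] + wd [B (i+1), T i] - wd [] | i. 1 \<le> i \<and> i \<le> n - 1}
   \<union> {wd [T j, B i] + wd [B i, T j] | i j. 1 \<le> i \<and> i \<le> n \<and> 1 \<le> j \<and> j \<le> n - 1
                                        \<and> i \<noteq> j \<and> i \<noteq> j + 1}"

inductive_set rel_ideal :: "nat \<Rightarrow> fa set" for n where
  rel: "r \<in> relators n \<Longrightarrow> r \<in> rel_ideal n"
| zero: "0 \<in> rel_ideal n"
| add: "x \<in> rel_ideal n \<Longrightarrow> y \<in> rel_ideal n \<Longrightarrow> x + y \<in> rel_ideal n"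
| scale: "x \<in> rel_ideal n \<Longrightarrow> fscale c x \<in> rel_ideal n"
| lmul: "x \<in> rel_ideal n \<Longrightarrow> a \<in> free_alg n \<Longrightarrow> fmul a x \<in> rel_ideal n"
| rmul: "x \<in> rel_ideal n \<Longrightarrow> a \<in> free_alg n \<Longrightarrow> fmul x a \<in> rel_ideal n"

inductive_set comm_span :: "nat \<Rightarrow> fa set" for n where
  comm: "a \<in> free_alg n \<Longrightarrow> b \<in> free_alg n \<Longrightarrow> fmul a b - fmul b a \<in> comm_span n"
| zero: "0 \<in> comm_span n"
| add: "x \<in> comm_span n \<Longrightarrow> y \<in> comm_span n \<Longrightarrow> x + y \<in> comm_span n"
| scale: "x \<in> comm_span n \<Longrightarrow> fscale c x \<in> comm_span n"

(* For x in the free algebra, its image in H = free_alg / rel_ideal lies in [H,H]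
   iff x lies in comm_span + rel_ideal. *)
definition in_commutator_H :: "nat \<Rightarrow> fa \<Rightarrow> bool" where
  "in_commutator_H n x \<longleftrightarrow> (\<exists>c\<in>comm_span n. \<exists>i\<in>rel_ideal n. x = c + i)"

fun tword :: "nat \<Rightarrow> nat list \<Rightarrow> gen list" where
  "tword a [] = []"
| "tword a (g # gs) = map T [a + 1 ..< a + g] @ tword (a + g) gs"

definition t_comp :: "nat list \<Rightarrow> fa" where
  "t_comp \<gamma> = wd (tword 0 \<gamma>)"

definition is_composition :: "nat \<Rightarrow> nat list \<Rightarrow> bool" where
  "is_composition n \<gamma> \<longleftrightarrow> (\<forall>g\<in>set \<gamma>. g > 0) \<and> sum_list \<gamma> = n"

end

theory Submission
  imports Defs
begin


lemma lookup_fscale [simp]: "Poly_Mapping.lookup (fscale c p) k = c * Poly_Mapping.lookup p k"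
  unfolding fscale_def by (simp add: Poly_Mapping.map.rep_eq when_def)

lemma lookup_wd: "Poly_Mapping.lookup (wd w) v = (if v = w then 1 else 0)"
  unfolding wd_def by (simp add: lookup_single when_def)

lemma keys_wd [simp]: "Poly_Mapping.keys (wd w) = {w}"
  unfolding wd_def by simp

lemma tk1: "take (length p) w = p \<Longrightarrow> p @ drop (length p) w = w"
  by (metis append_take_drop_id)
lemma tk2: "drop (length w - length q) w = q \<Longrightarrow> take (length w - length q) w @ q = w"
  by (metis append_take_drop_id)

lemma fmul_wd_l: "Poly_Mapping.lookup (fmul (wd p) x) w =
   (if (\<exists>v. w = p @ v) then Poly_Mapping.lookup x (drop (length p) w) else 0)"
proof -
  have "Poly_Mapping.lookup (fmul (wd p) x) w =
     (\<Sum>v\<in>Poly_Mapping.keys x. (if p @ v = w then Poly_Mapping.lookup x v else 0))"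
    unfolding fmul_def by (simp add: lookup_sum lookup_single when_def lookup_wd)
  also have "\<dots> = (if (\<exists>v. w = p @ v) then Poly_Mapping.lookup x (drop (length p) w) else 0)"
  proof (cases "\<exists>v. w = p @ v")
    case True
    then obtain v where v: "w = p @ v" by blast
    have "(\<Sum>v'\<in>Poly_Mapping.keys x. (if p @ v' = w then Poly_Mapping.lookup x v' else 0))
       = (\<Sum>v'\<in>Poly_Mapping.keys x. (if v' = v then Poly_Mapping.lookup x v' else 0))"
      by (rule sum.cong) (auto simp: v)
    also have "\<dots> = Poly_Mapping.lookup x v" by (auto simp: sum.delta' in_keys_iff)
    finally show ?thesis using v by simp
  next
    case False
    then show ?thesis by (auto intro!: sum.neutral)
  qed
  finally show ?thesis .
qed

lemma fmul_wd_r: "Poly_Mapping.lookup (fmul x (wd q)) w =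
   (if (\<exists>u. w = u @ q) then Poly_Mapping.lookup x (take (length w - length q) w) else 0)"
proof -
  have "Poly_Mapping.lookup (fmul x (wd q)) w =
     (\<Sum>v\<in>Poly_Mapping.keys x. (if v @ q = w then Poly_Mapping.lookup x v else 0))"
    unfolding fmul_def by (simp add: lookup_sum lookup_single when_def lookup_wd)
  also have "\<dots> = (if (\<exists>u. w = u @ q) then Poly_Mapping.lookup x (take (length w - length q) w) else 0)"
  proof (cases "\<exists>u. w = u @ q")
    case True
    then obtain v where v: "w = v @ q" by blast
    have "(\<Sum>v'\<in>Poly_Mapping.keys x. (if v' @ q = w then Poly_Mapping.lookup x v' else 0))
       = (\<Sum>v'\<in>Poly_Mapping.keys x. (if v' = v then Poly_Mapping.lookup x v' else 0))"
      by (rule sum.cong) (auto simp: v)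
    also have "\<dots> = Poly_Mapping.lookup x v" by (auto simp: sum.delta' in_keys_iff)
    finally show ?thesis using v by simp
  next
    case False
    then show ?thesis by (auto intro!: sum.neutral)
  qed
  finally show ?thesis .
qed

lemma fmul_wd_wd: "fmul (wd u) (wd v) = wd (u @ v)"
  by (rule poly_mapping_eqI) (auto simp: fmul_wd_l lookup_wd)

lemma wd_free: "set w \<subseteq> gens n \<Longrightarrow> wd w \<in> free_alg n"
  unfolding free_alg_def by simp

definition SR :: "nat \<Rightarrow> complex \<Rightarrow> gen list \<Rightarrow> gen list \<Rightarrow> bool" where
  "SR n e u v \<longleftrightarrow> wd u - fscale e (wd v) \<in> rel_ideal n"

lemma SR_pre:
  assumes "SR n e u v" "set p \<subseteq> gens n"
  shows "SR n e (p @ u) (p @ v)"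
proof -
  have "fmul (wd p) (wd u - fscale e (wd v)) \<in> rel_ideal n"
    using assms by (auto simp: SR_def intro: rel_ideal.lmul wd_free)
  moreover have "fmul (wd p) (wd u - fscale e (wd v)) = wd (p @ u) - fscale e (wd (p @ v))"
    by (rule poly_mapping_eqI) (auto simp: fmul_wd_l lookup_wd lookup_minus)
  ultimately show ?thesis by (simp add: SR_def)
qed

lemma SR_suf:
  assumes "SR n e u v" "set q \<subseteq> gens n"
  shows "SR n e (u @ q) (v @ q)"
proof -
  have "fmul (wd u - fscale e (wd v)) (wd q) \<in> rel_ideal n"
    using assms by (auto simp: SR_def intro: rel_ideal.rmul wd_free)
  moreover have "fmul (wd u - fscale e (wd v)) (wd q) = wd (u @ q) - fscale e (wd (v @ q))"
    apply (rule poly_mapping_eqI)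
    apply (auto simp: fmul_wd_r lookup_wd lookup_minus)
    done
  ultimately show ?thesis by (simp add: SR_def)
qed

lemma SR_refl: "SR n 1 u u"
proof -
  have "wd u - fscale 1 (wd u) = 0" by (rule poly_mapping_eqI) (simp add: lookup_minus)
  thus ?thesis by (simp add: SR_def rel_ideal.zero)
qed

lemma SR_sym: assumes "e \<in> {1,-1}" "SR n e u v" shows "SR n e v u"
proof -
  have "fscale (-e) (wd u - fscale e (wd v)) \<in> rel_ideal n"
    using assms by (auto simp: SR_def intro: rel_ideal.scale)
  moreover have "fscale (-e) (wd u - fscale e (wd v)) = wd v - fscale e (wd u)"
    using assms(1) by (intro poly_mapping_eqI) (auto simp: lookup_minus algebra_simps)
  ultimately show ?thesis by (simp add: SR_def)
qed

lemma SR_trans: assumes "SR n e u v" "SR n f v w" shows "SR n (e*f) u w"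
proof -
  have "(wd u - fscale e (wd v)) + fscale e (wd v - fscale f (wd w)) \<in> rel_ideal n"
    using assms by (auto simp: SR_def intro: rel_ideal.scale rel_ideal.add)
  moreover have "(wd u - fscale e (wd v)) + fscale e (wd v - fscale f (wd w)) = wd u - fscale (e*f) (wd w)"
    by (intro poly_mapping_eqI) (auto simp: lookup_minus lookup_add algebra_simps)
  ultimately show ?thesis by (simp add: SR_def)
qed

lemma SR_rel: "wd u - fscale e (wd v) \<in> relators n \<Longrightarrow> SR n e u v"
  by (simp add: SR_def rel_ideal.rel)

lemma fscale1: "fscale 1 x = x" by (intro poly_mapping_eqI) simp
lemma fscalem1: "fscale (-1) x = - x" by (intro poly_mapping_eqI) simp

lemma R_sq: assumes "1 \<le> i" "i < n" shows "SR n 1 [T i, T i] []"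
proof (rule SR_rel)
  have "wd [T i, T i] - wd [] \<in> {wd [T i, T i] - wd [] | i. 1 \<le> i \<and> i \<le> n - 1}"
    using assms by auto
  thus "wd [T i, T i] - fscale 1 (wd []) \<in> relators n" unfolding relators_def fscale1 by blast
qed

lemma R_braid: assumes "1 \<le> i" "i + 1 < n"
  shows "SR n 1 [T i, T (i+1), T i] [T (i+1), T i, T (i+1)]"
proof (rule SR_rel)
  have "wd [T i, T (i+1), T i] - wd [T (i+1), T i, T (i+1)] \<in> {wd [T i, T (i+1), T i] - wd [T (i+1), T i, T (i+1)] | i. 1 \<le> i \<and> i + 1 \<le> n - 1}"
    using assms by auto
  thus "wd [T i, T (i+1), T i] - fscale 1 (wd [T (i+1), T i, T (i+1)]) \<in> relators n" unfolding relators_def fscale1 by blast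
qed

lemma R_far4: assumes "1 \<le> i" "i < n" "1 \<le> j" "j < n" "(i > j + 1 \<or> j > i + 1)"
  shows "SR n (-1) [T i, T j, T i, T j] []"
proof (rule SR_rel)
  have "wd [T i, T j, T i, T j] + wd [] \<in> {wd [T i, T j, T i, T j] + wd [] | i j. 1 \<le> i \<and> i \<le> n - 1 \<and> 1 \<le> j \<and> j \<le> n - 1
                                        \<and> (i > j + 1 \<or> j > i + 1)}"
    apply (rule CollectI, rule exI[of _ i], rule exI[of _ j]) using assms by auto
  thus "wd [T i, T j, T i, T j] - fscale (-1) (wd []) \<in> relators n" unfolding relators_def fscalem1 diff_minus_eq_add minus_minus by blast
qed

definition okw :: "nat \<Rightarrow> gen list \<Rightarrow> bool" where
  "okw n w \<longleftrightarrow> (\<forall>x\<in>set w. \<exists>i. x = T i \<and> 1 \<le> i \<and> i < n)"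

lemma okw_gens: "okw n w \<Longrightarrow> set w \<subseteq> gens n"
  unfolding okw_def gens_def by force

lemma okw_simps [simp]: "okw n [] = True" "okw n (x # w) = ((\<exists>i. x = T i \<and> 1 \<le> i \<and> i < n) \<and> okw n w)"
  "okw n (u @ v) = (okw n u \<and> okw n v)" "okw n (rev w) = okw n w"
  by (auto simp: okw_def)

lemma SR_ctx: "SR n e u v \<Longrightarrow> okw n p \<Longrightarrow> okw n q \<Longrightarrow> SR n e (p @ u @ q) (p @ v @ q)"
  by (metis SR_pre SR_suf append.assoc okw_gens)

lemma SR_far2: assumes "1 \<le> i" "i < n" "1 \<le> j" "j < n" "i > j + 1 \<or> j > i + 1"
  shows "SR n (-1) [T i, T j] [T j, T i]"
proof -
  have 1: "SR n 1 [T i, T j, T i, T j, T j, T i] [T i, T j, T i, T i]"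
    using SR_ctx[OF R_sq[of j n], of "[T i,T j,T i]" "[T i]"] assms by simp
  have 2: "SR n 1 [T i, T j, T i, T i] [T i, T j]"
    using SR_ctx[OF R_sq[of i n], of "[T i,T j]" "[]"] assms by simp
  have 3: "SR n (-1) [T i, T j, T i, T j, T j, T i] [T j, T i]"
    using SR_ctx[OF R_far4[of i n j], of "[]" "[T j, T i]"] assms by simp
  have "SR n 1 [T i, T j] [T i, T j, T i, T j, T j, T i]"
    using SR_sym[OF _ SR_trans[OF 1 2]] by simp
  from SR_trans[OF this 3] show ?thesis by simp
qed

definition far :: "gen list \<Rightarrow> gen list \<Rightarrow> bool" where
  "far u v \<longleftrightarrow> (\<forall>i j. T i \<in> set u \<longrightarrow> T j \<in> set v \<longrightarrow> (j + 1 < i \<or> i + 1 < j))"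

lemma commute1: "okw n w \<Longrightarrow> 1 \<le> i \<Longrightarrow> i < n \<Longrightarrow> (\<forall>j. T j \<in> set w \<longrightarrow> (j + 1 < i \<or> i + 1 < j))
   \<Longrightarrow> SR n ((-1)^length w) (T i # w) (w @ [T i])"
proof (induction w)
  case Nil then show ?case by (simp add: SR_refl)
next
  case (Cons x w)
  from Cons.prems obtain j where x: "x = T j" "1 \<le> j" "j < n" by auto
  have a: "SR n (-1) (T i # T j # w) (T j # T i # w)"
    using SR_ctx[OF SR_far2[of i n j], of "[]" w] Cons.prems x by auto
  have "SR n ((-1)^length w) (T i # w) (w @ [T i])" using Cons by auto
  from SR_ctx[OF this, of "[T j]" "[]"] have b: "SR n ((-1)^length w) (T j # T i # w) (T j # w @ [T i])"
    using x by simp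
  from SR_trans[OF a b] show ?case using x by simp
qed

lemma commute: "okw n u \<Longrightarrow> okw n v \<Longrightarrow> far u v \<Longrightarrow> SR n ((-1)^(length u * length v)) (u @ v) (v @ u)"
proof (induction u)
  case Nil then show ?case by (simp add: SR_refl)
next
  case (Cons x u)
  from Cons.prems obtain i where x: "x = T i" "1 \<le> i" "i < n" by auto
  have "far u v" using Cons.prems by (auto simp: far_def)
  with Cons have "SR n ((-1)^(length u * length v)) (u @ v) (v @ u)" by auto
  from SR_ctx[OF this, of "[T i]" "[]"] have a: "SR n ((-1)^(length u * length v)) (T i # u @ v) (T i # v @ u)"
    using x by simp
  have "SR n ((-1)^length v) (T i # v) (v @ [T i])"
    by (rule commute1) (use Cons.prems x in \<open>auto simp: far_def\<close>)
  from SR_ctx[OF this, of "[]" u] have b: "SR n ((-1)^length v) (T i # v @ u) (v @ T i # u)"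
    using Cons.prems by simp
  from SR_trans[OF a b] show ?case using x by (simp add: power_add algebra_simps)
qed

lemma rev_cancel: "okw n w \<Longrightarrow> SR n 1 (rev w @ w) []"
proof (induction w)
  case Nil then show ?case by (simp add: SR_refl)
next
  case (Cons x w)
  from Cons.prems obtain i where x: "x = T i" "1 \<le> i" "i < n" by auto
  have "SR n 1 (rev w @ [T i, T i] @ w) (rev w @ [] @ w)"
    by (rule SR_ctx[OF R_sq]) (use x Cons.prems in auto)
  from SR_trans[OF this] Cons x show ?case by auto
qed

lemma rev_cancel2: "okw n w \<Longrightarrow> SR n 1 (w @ rev w) []"
  using rev_cancel[of n "rev w"] by simp

definition TE :: "nat \<Rightarrow> complex \<Rightarrow> gen list \<Rightarrow> gen list \<Rightarrow> bool" where
  "TE n e u v \<longleftrightarrow> in_commutator_H n (wd u - fscale e (wd v))"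

lemma CH_I: "x \<in> rel_ideal n \<Longrightarrow> in_commutator_H n x"
  unfolding in_commutator_H_def by (rule bexI[of _ 0]) (auto intro: comm_span.zero)

lemma CH_C: "x \<in> comm_span n \<Longrightarrow> in_commutator_H n x"
  unfolding in_commutator_H_def by (rule bexI[of _ x]) (auto intro: rel_ideal.zero)

lemma CH_add: "in_commutator_H n x \<Longrightarrow> in_commutator_H n y \<Longrightarrow> in_commutator_H n (x + y)"
proof -
  assume "in_commutator_H n x" "in_commutator_H n y"
  then obtain c1 i1 c2 i2 where "c1 \<in> comm_span n" "i1 \<in> rel_ideal n" "x = c1 + i1"
     "c2 \<in> comm_span n" "i2 \<in> rel_ideal n" "y = c2 + i2" unfolding in_commutator_H_def by blast
  moreover have "c1 + i1 + (c2 + i2) = (c1 + c2) + (i1 + i2)" by (simp add: algebra_simps)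
  ultimately show ?thesis unfolding in_commutator_H_def by (metis comm_span.add rel_ideal.add)
qed

lemma fscale_add: "fscale c (x + y) = fscale c x + fscale c y"
  by (intro poly_mapping_eqI) (simp add: lookup_add algebra_simps)

lemma CH_scale: "in_commutator_H n x \<Longrightarrow> in_commutator_H n (fscale c x)"
proof -
  assume "in_commutator_H n x"
  then obtain c1 i1 where "c1 \<in> comm_span n" "i1 \<in> rel_ideal n" "x = c1 + i1"
     unfolding in_commutator_H_def by blast
  thus ?thesis unfolding in_commutator_H_def fscale_add
    by (intro bexI[of _ "fscale c c1"] bexI[of _ "fscale c i1"]) (auto intro: comm_span.scale rel_ideal.scale simp: fscale_add)
qed

lemma TE_of_SR: "SR n e u v \<Longrightarrow> TE n e u v"
  by (simp add: SR_def TE_def CH_I)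

lemma TE_trans: assumes "TE n e u v" "TE n f v w" shows "TE n (e*f) u w"
proof -
  have "in_commutator_H n ((wd u - fscale e (wd v)) + fscale e (wd v - fscale f (wd w)))"
    using assms by (auto simp: TE_def intro: CH_add CH_scale)
  moreover have "(wd u - fscale e (wd v)) + fscale e (wd v - fscale f (wd w)) = wd u - fscale (e*f) (wd w)"
    by (intro poly_mapping_eqI) (auto simp: lookup_minus lookup_add algebra_simps)
  ultimately show ?thesis by (simp add: TE_def)
qed

lemma TE_rot: assumes "okw n u" "okw n v" shows "TE n 1 (u @ v) (v @ u)"
proof -
  have "fmul (wd u) (wd v) - fmul (wd v) (wd u) \<in> comm_span n"
    using assms by (auto intro!: comm_span.comm wd_free okw_gens)
  thus ?thesis by (simp add: TE_def fmul_wd_wd fscale1 CH_C)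
qed

definition TR :: "nat \<Rightarrow> gen list \<Rightarrow> gen list \<Rightarrow> gen list \<Rightarrow> bool" where
  "TR n W x y \<longleftrightarrow> (\<exists>e\<in>{1,-1}. SR n e (W @ x) (y @ W))"

lemma sgn_mult: "e \<in> {1,-1::complex} \<Longrightarrow> f \<in> {1,-1} \<Longrightarrow> e * f \<in> {1,-1}" by auto

lemma TR_comp: assumes "okw n W1" "okw n W2" "TR n W1 x y" "TR n W2 y z" shows "TR n (W2 @ W1) x z"
proof -
  obtain e f where ef: "e \<in> {1,-1}" "f \<in> {1,-1}" "SR n e (W1 @ x) (y @ W1)" "SR n f (W2 @ y) (z @ W2)"
    using assms by (auto simp: TR_def)
  have a: "SR n e (W2 @ W1 @ x) (W2 @ y @ W1)" using SR_ctx[OF ef(3), of W2 "[]"] assms by simp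
  have b: "SR n f (W2 @ y @ W1) (z @ W2 @ W1)" using SR_ctx[OF ef(4), of "[]" W1] assms by simp
  show ?thesis unfolding TR_def using SR_trans[OF a b] sgn_mult[OF ef(1,2)] by auto
qed

lemma TR_app: assumes "okw n x'" "okw n y" "TR n W x y" "TR n W x' y'" shows "TR n W (x @ x') (y @ y')"
proof -
  obtain e f where ef: "e \<in> {1,-1}" "f \<in> {1,-1}" "SR n e (W @ x) (y @ W)" "SR n f (W @ x') (y' @ W)"
    using assms by (auto simp: TR_def)
  have a: "SR n e (W @ x @ x') (y @ W @ x')" using SR_ctx[OF ef(3), of "[]" x'] assms by simp
  have b: "SR n f (y @ W @ x') (y @ y' @ W)" using SR_ctx[OF ef(4), of y "[]"] assms by simp
  show ?thesis unfolding TR_def using SR_trans[OF a b] sgn_mult[OF ef(1,2)] by auto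
qed

lemma TR_nil: "TR n W [] []"
  unfolding TR_def using SR_refl by auto

lemma TR_map: "okw n xs \<Longrightarrow> (\<forall>a\<in>set xs. okw n [f a] \<and> TR n W [a] [f a]) \<Longrightarrow> TR n W xs (map f xs)"
proof (induction xs)
  case Nil then show ?case by (simp add: TR_nil)
next
  case (Cons a xs)
  have "okw n (map f xs)" using Cons.prems by (auto simp: okw_def)
  then show ?case using TR_app[of n xs "[f a]" W "[a]" "map f xs"] Cons by auto
qed

lemma TR_TE: assumes "okw n W" "okw n x" "okw n y" "TR n W x y" shows "\<exists>e\<in>{1,-1}. TE n e x y"
proof -
  obtain e where e: "e \<in> {1,-1}" "SR n e (W @ x) (y @ W)" using assms by (auto simp: TR_def)
  have "SR n 1 (rev W @ W @ x) ([] @ [] @ x)" using SR_ctx[OF rev_cancel[of n W], of "[]" x] assms by simp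
  hence "SR n 1 x (rev W @ W @ x)" using SR_sym[of 1] by simp
  hence 1: "TE n 1 x (rev W @ W @ x)" by (rule TE_of_SR)
  have 2: "TE n 1 (rev W @ W @ x) (W @ x @ rev W)" using TE_rot[of n "rev W" "W @ x"] assms by simp
  have 3: "SR n e (W @ x @ rev W) (y @ W @ rev W)" using SR_ctx[OF e(2), of "[]" "rev W"] assms by simp
  have 4: "SR n 1 (y @ W @ rev W) (y @ [] @ [])" using SR_ctx[OF rev_cancel2[of n W], of y "[]"] assms by simp
  have "TE n (1 * 1 * e * 1) x y"
    using TE_trans[OF TE_trans[OF TE_trans[OF 1 2] TE_of_SR[OF 3]] TE_of_SR[OF 4]] by simp
  thus ?thesis using e by auto
qed



definition PM :: "nat \<Rightarrow> gen list \<Rightarrow> gen list \<Rightarrow> bool" where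
  "PM n u v \<longleftrightarrow> (\<exists>e\<in>{1,-1}. SR n e u v)"

lemma negpow: "(-1::complex)^k \<in> {1,-1}"
  by (induction k) auto

lemma PM_of_SR: "e \<in> {1,-1} \<Longrightarrow> SR n e u v \<Longrightarrow> PM n u v" unfolding PM_def by blast
lemma PM_of_SRp: "SR n ((-1)^k) u v \<Longrightarrow> PM n u v" using PM_of_SR negpow by blast
lemma PM_refl: "PM n u u" using SR_refl[of n u] PM_of_SR[of 1] by simp
lemma PM_sym: "PM n u v \<Longrightarrow> PM n v u" unfolding PM_def using SR_sym by blast
lemma PM_trans: "PM n u v \<Longrightarrow> PM n v w \<Longrightarrow> PM n u w"
  unfolding PM_def using SR_trans sgn_mult by blast
lemma PM_ctx: "PM n u v \<Longrightarrow> okw n p \<Longrightarrow> okw n q \<Longrightarrow> PM n (p @ u @ q) (p @ v @ q)"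
  unfolding PM_def using SR_ctx by blast
lemma PM_ctxl: "PM n u v \<Longrightarrow> okw n p \<Longrightarrow> PM n (p @ u) (p @ v)"
  using PM_ctx[of n u v p "[]"] by simp
lemma PM_ctxr: "PM n u v \<Longrightarrow> okw n q \<Longrightarrow> PM n (u @ q) (v @ q)"
  using PM_ctx[of n u v "[]" q] by simp

lemma TR_PM: "TR n W x y \<longleftrightarrow> PM n (W @ x) (y @ W)" unfolding TR_def PM_def by simp

definition cw :: "nat \<Rightarrow> nat \<Rightarrow> gen list" where
  "cw s k = map T [s+1..<s+k+1]"

lemma okw_cw: "s + k < n \<Longrightarrow> okw n (cw s k)" unfolding cw_def okw_def by auto

lemma set_cw: "T i \<in> set (cw s k) \<longleftrightarrow> s + 1 \<le> i \<and> i \<le> s + k" unfolding cw_def by auto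

lemma cw_Suc: "cw s (Suc k) = cw s k @ [T (s + Suc k)]" unfolding cw_def by simp

lemma commuteP: "okw n u \<Longrightarrow> okw n v \<Longrightarrow> far u v \<Longrightarrow> PM n (u @ v) (v @ u)"
  using commute PM_of_SRp by blast

lemma L1: assumes "s + k < n" "s + 1 \<le> i" "i + 1 \<le> s + k"
  shows "TR n (cw s k) [T i] [T (i+1)]"
proof -
  define A where "A = map T [s+1..<i]"
  define B where "B = map T [i+2..<s+k+1]"
  have cwe: "cw s k = A @ [T i, T (i+1)] @ B"
  proof -
    have "[s+1..<s+k+1] = [s+1..<i] @ [i..<i + (s+k+1-i)]"
      using upt_add_eq_append[of "s+1" i "s+k+1-i"] assms by simp
    also have "[i..<i + (s+k+1-i)] = i # (i+1) # [i+2..<s+k+1]"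
      using assms by (simp add: upt_conv_Cons)
    finally show ?thesis unfolding cw_def A_def B_def by simp
  qed
  have oA: "okw n A" and oB: "okw n B" using assms by (auto simp: A_def B_def okw_def)
  have 1: "PM n (B @ [T i]) ([T i] @ B)"
    by (rule PM_sym, rule commuteP) (use oB assms in \<open>auto simp: far_def B_def\<close>)
  have 2: "PM n (A @ [T i, T (i+1)] @ B @ [T i]) (A @ [T i, T (i+1), T i] @ B)"
    using PM_ctxl[OF 1, of "A @ [T i, T (i+1)]"] oA assms by simp
  have 3: "PM n (A @ [T i, T (i+1), T i] @ B) (A @ [T (i+1), T i, T (i+1)] @ B)"
    using PM_ctx[OF PM_of_SR[OF _ R_braid[of i n]] oA oB] assms by simp
  have 4: "PM n (A @ [T (i+1)]) ([T (i+1)] @ A)"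
    by (rule PM_sym, rule commuteP) (use oA assms in \<open>auto simp: far_def A_def\<close>)
  have 5: "PM n (A @ [T (i+1), T i, T (i+1)] @ B) ([T (i+1)] @ A @ [T i, T (i+1)] @ B)"
    using PM_ctxr[OF 4, of "[T i, T (i+1)] @ B"] oB assms by simp
  show ?thesis unfolding TR_PM cwe using PM_trans[OF PM_trans[OF 2 3] 5] by simp
qed

definition Zp :: "nat \<Rightarrow> nat \<Rightarrow> nat \<Rightarrow> gen list" where
  "Zp s k j = concat (replicate j (cw s k))"

lemma okw_Zp: "s + k < n \<Longrightarrow> okw n (Zp s k j)"
  unfolding Zp_def using okw_cw[of s k n] by (induction j) auto

lemma Zp_Suc: "Zp s k (Suc j) = cw s k @ Zp s k j" unfolding Zp_def by simp

lemma Zp_add: "Zp s k (i + j) = Zp s k i @ Zp s k j" unfolding Zp_def by (simp add: replicate_add)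

lemma set_Zp: "T i \<in> set (Zp s k j) \<Longrightarrow> s + 1 \<le> i \<and> i \<le> s + k"
  unfolding Zp_def using set_cw by (induction j) auto

lemma powTR: "s + k < n \<Longrightarrow> s + 1 \<le> i \<Longrightarrow> i + j \<le> s + k \<Longrightarrow> TR n (Zp s k j) [T i] [T (i + j)]"
proof (induction j)
  case 0 then show ?case by (simp add: TR_PM Zp_def PM_refl)
next
  case (Suc j)
  have "TR n (Zp s k j) [T i] [T (i + j)]" using Suc by auto
  moreover have "TR n (cw s k) [T (i+j)] [T (i + j + 1)]" using Suc.prems by (intro L1) auto
  ultimately have "TR n (cw s k @ Zp s k j) [T i] [T (i + j + 1)]"
    using TR_comp okw_Zp okw_cw Suc.prems by blast
  thus ?case by (simp add: Zp_Suc)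
qed



definition dn :: "nat \<Rightarrow> nat \<Rightarrow> gen list" where
  "dn s k = cw s (k - 1) @ [T (s + k)] @ rev (cw s (k - 1))"

definition upw :: "nat \<Rightarrow> nat \<Rightarrow> gen list" where
  "upw s k = rev (cw s k) @ [T (s + 1)] @ cw s k"

lemma okw_dn: "s + k < n \<Longrightarrow> 1 \<le> k \<Longrightarrow> okw n (dn s k)"
  unfolding dn_def using okw_cw[of s "k-1" n] by auto

lemma okw_upw: "s + k < n \<Longrightarrow> 1 \<le> k \<Longrightarrow> okw n (upw s k)"
  unfolding upw_def using okw_cw[of s k n] by auto

lemma up_dn: "1 \<le> k \<Longrightarrow> s + k < n \<Longrightarrow> PM n (upw s k) (dn s k)"
proof (induction k)
  case 0 then show ?case by simp
next
  case (Suc k)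
  show ?case
  proof (cases "k = 0")
    case True
    have "PM n ([] @ [T (s+1), T (s+1)] @ [T (s+1)]) ([] @ [] @ [T (s+1)])"
      by (rule PM_ctx[OF PM_of_SR[OF _ R_sq]]) (use Suc.prems in auto)
    then show ?thesis using True by (simp add: upw_def dn_def cw_def)
  next
    case False
    let ?t = "T (s + k + 1)"
    let ?u = "T (s + k)"
    define c where "c = cw s (k - 1)"
    have oc: "okw n c" using Suc.prems unfolding c_def by (intro okw_cw) auto
    have kk: "k = Suc (k - 1)" using False by simp
    have cwk: "cw s k = c @ [?u]" unfolding c_def by (subst kk, subst cw_Suc) (use kk in simp)
    have IH: "PM n (upw s k) (dn s k)" using Suc False by auto
    have e1: "upw s (Suc k) = [?t] @ upw s k @ [?t]" unfolding upw_def by (simp add: cw_Suc)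
    have 1: "PM n (upw s (Suc k)) ([?t] @ dn s k @ [?t])"
      unfolding e1 by (rule PM_ctx[OF IH]) (use Suc.prems in auto)
    have dk: "dn s k = c @ [?u] @ rev c" unfolding dn_def c_def by simp
    have far1: "far [?t] c" "far (rev c) [?t]" unfolding far_def c_def using set_cw[of _ s "k-1"] by auto
    have 2: "PM n ([?t] @ c) (c @ [?t])" using commuteP[OF _ oc far1(1)] Suc.prems by simp
    have 3: "PM n (rev c @ [?t]) ([?t] @ rev c)" using commuteP[OF _ _ far1(2)] oc Suc.prems by simp
    have 4: "PM n ([?t] @ c @ [?u] @ rev c @ [?t]) (c @ [?t] @ [?u] @ rev c @ [?t])"
      using PM_ctxr[OF 2, of "[?u] @ rev c @ [?t]"] oc Suc.prems False by simp
    have 5: "PM n (c @ [?t] @ [?u] @ rev c @ [?t]) (c @ [?t] @ [?u] @ [?t] @ rev c)"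
      using PM_ctxl[OF 3, of "c @ [?t] @ [?u]"] oc Suc.prems False by simp
    have 6: "PM n (c @ [?t, ?u, ?t] @ rev c) (c @ [?u, ?t, ?u] @ rev c)"
      using PM_ctx[OF PM_sym[OF PM_of_SR[OF _ R_braid[of "s+k" n]]] oc, of "rev c"] oc Suc.prems False by simp
    have e2: "dn s (Suc k) = c @ [?u, ?t, ?u] @ rev c" unfolding dn_def using cwk by simp
    have h1: "PM n (upw s (Suc k)) ([?t] @ c @ [?u] @ rev c @ [?t])" using 1 dk by simp
    show ?thesis using PM_trans[OF PM_trans[OF PM_trans[OF h1 4] 5]] 6 e2 by simp
  qed
qed

lemma T2: assumes "1 \<le> k" "s + k < n" shows "TR n (cw s k) [T (s + k)] (dn s k)"
proof -
  define c where "c = cw s (k - 1)"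
  have oc: "okw n c" using assms unfolding c_def by (intro okw_cw) auto
  have kk: "k = Suc (k - 1)" using assms by simp
  have cwk: "cw s k = c @ [T (s+k)]" unfolding c_def by (subst kk, subst cw_Suc) (use kk in simp)
  have 1: "PM n (c @ [T (s+k), T (s+k)]) c"
    using PM_ctx[OF PM_of_SR[OF _ R_sq[of "s+k" n]], of c "[]"] assms oc by simp
  have 2: "PM n (c @ [T (s+k)] @ rev c @ c @ [T (s+k)]) (c @ [T (s+k), T (s+k)])"
    using PM_ctx[OF PM_of_SR[OF _ rev_cancel[of n c]], of "c @ [T(s+k)]" "[T(s+k)]"] assms oc by simp
  have "PM n (cw s k @ [T (s + k)]) c" using 1 cwk by simp
  moreover have "PM n (dn s k @ cw s k) c" using PM_trans[OF 2 1] cwk unfolding dn_def c_def[symmetric] by simp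
  ultimately show ?thesis unfolding TR_PM using PM_trans PM_sym by blast
qed

lemma T3: assumes "1 \<le> k" "s + k < n" shows "TR n (cw s k) (dn s k) [T (s + 1)]"
proof -
  have o: "okw n (cw s k)" using assms okw_cw by auto
  have 1: "PM n (cw s k @ dn s k) (cw s k @ upw s k)"
    using PM_ctxl[OF PM_sym[OF up_dn[OF assms]] o] .
  have 2: "PM n ([] @ (cw s k @ rev (cw s k)) @ [T (s+1)] @ cw s k) ([] @ [] @ [T (s+1)] @ cw s k)"
    by (rule PM_ctx[OF PM_of_SR[OF _ rev_cancel2]]) (use assms o in auto)
  show ?thesis unfolding TR_PM using PM_trans[OF 1] 2 by (simp add: upw_def)
qed

lemma farTR: assumes "okw n W" "1 \<le> j" "j < n" "\<forall>i. T i \<in> set W \<longrightarrow> (j + 1 < i \<or> i + 1 < j)"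
  shows "TR n W [T j] [T j]"
  unfolding TR_PM by (rule commuteP) (use assms in \<open>auto simp: far_def\<close>)



lemma tword_append: "tword a (xs @ ys) = tword a xs @ tword (a + sum_list xs) ys"
  by (induction xs arbitrary: a) (auto simp: add.assoc)

lemma tword_letters: "x \<in> set (tword a xs) \<Longrightarrow> \<exists>i. x = T i \<and> a < i \<and> i < a + sum_list xs"
proof (induction xs arbitrary: a)
  case Nil then show ?case by simp
next
  case (Cons g xs)
  show ?case using Cons.prems Cons.IH[of "a + g"] by auto
qed

lemma tword_len: "(\<forall>g\<in>set xs. 0 < g) \<Longrightarrow> length (tword a xs) + length xs = sum_list xs"
  by (induction xs arbitrary: a) auto

lemma okw_tword: "a + sum_list xs \<le> n \<Longrightarrow> okw n (tword a xs)"
  unfolding okw_def using tword_letters by fastforce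

definition PTE :: "nat \<Rightarrow> gen list \<Rightarrow> gen list \<Rightarrow> bool" where
  "PTE n u v \<longleftrightarrow> (\<exists>e\<in>{1,-1}. TE n e u v)"

lemma PTE_trans: "PTE n u v \<Longrightarrow> PTE n v w \<Longrightarrow> PTE n u w"
  unfolding PTE_def using TE_trans sgn_mult by blast

lemma PTE_refl: "PTE n u u"
  unfolding PTE_def using TE_of_SR[OF SR_refl] by auto

lemma PTE_of_PM: "PM n u v \<Longrightarrow> PTE n u v"
  unfolding PTE_def PM_def using TE_of_SR by blast

lemma TR_upt: "(\<forall>j\<in>set L. okw n [T (g j)] \<and> okw n [T (h j)] \<and> TR n W [T (g j)] [T (h j)]) \<Longrightarrow>
   TR n W (map (\<lambda>j. T (g j)) L) (map (\<lambda>j. T (h j)) L)"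
proof (induction L)
  case Nil then show ?case by (simp add: TR_nil)
next
  case (Cons j L)
  have "okw n (map (\<lambda>j. T (g j)) L)" using Cons.prems by (auto simp: okw_def)
  then show ?case using TR_app[of n "map (\<lambda>j. T (g j)) L" "[T (h j)]" W "[T (g j)]" "map (\<lambda>j. T (h j)) L"] Cons
    by auto
qed

lemma upt_shift: "map (\<lambda>i. i + d) [lo..<hi] = [lo + d..<hi + d]"
  by (induction hi) auto

lemma mapT_shift: "map (\<lambda>i. T (i + d)) [lo..<hi] = map T [lo + d..<hi + d]"
  using arg_cong[OF upt_shift[of d lo hi], of "map T"] by (simp add: comp_def)

lemma Ycore: assumes "1 \<le> r" "r + 1 \<le> b" "a + b = k + 1" "s + k < n" "1 \<le> a"
  shows "TR n (Zp s k b) [T (s + a + r)] [T (s + r)]"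
proof -
  have k1: "1 \<le> k" using assms by simp
  have t1: "TR n (Zp s k (b - 1 - r)) [T (s + a + r)] [T (s + k)]"
    using powTR[of s k n "s + a + r" "b - 1 - r"] assms by simp
  have t2: "TR n (cw s k) [T (s + k)] (dn s k)" using T2 k1 assms by simp
  have t3: "TR n (cw s k) (dn s k) [T (s + 1)]" using T3 k1 assms by simp
  have t4: "TR n (Zp s k (r - 1)) [T (s + 1)] [T (s + r)]"
    using powTR[of s k n "s + 1" "r - 1"] assms by simp
  have o: "okw n (cw s k)" "okw n (Zp s k j)" for j using assms okw_cw okw_Zp by auto
  have "TR n (cw s k @ Zp s k (b - 1 - r)) [T (s + a + r)] (dn s k)" using TR_comp[OF o(2) o(1) t1 t2] .
  hence "TR n (cw s k @ cw s k @ Zp s k (b - 1 - r)) [T (s + a + r)] [T (s + 1)]"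
    using TR_comp[OF _ o(1) _ t3] o by simp
  hence "TR n (Zp s k (r - 1) @ cw s k @ cw s k @ Zp s k (b - 1 - r)) [T (s + a + r)] [T (s + r)]"
    using TR_comp[OF _ o(2) _ t4] o by simp
  moreover have "Zp s k (r - 1) @ cw s k @ cw s k @ Zp s k (b - 1 - r) = Zp s k b"
  proof -
    have e: "b = (r - 1) + (Suc (Suc (b - 1 - r)))" using assms by linarith
    have "Zp s k b = Zp s k ((r - 1) + (Suc (Suc (b - 1 - r))))" by (simp only: e[symmetric])
    thus ?thesis by (simp only: Zp_add Zp_Suc)
  qed
  ultimately show ?thesis by simp
qed



lemma swap: assumes pos: "\<forall>g\<in>set (xs@[a,b]@ys). 0 < g" and sm: "sum_list (xs@[a,b]@ys) = n"
  shows "PTE n (tword 0 (xs@[a,b]@ys)) (tword 0 (xs@[b,a]@ys))"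
proof -
  define s where "s = sum_list xs"
  define k where "k = a + b - 1"
  define W where "W = Zp s k b"
  have a1: "1 \<le> a" and b1: "1 \<le> b" using pos by auto
  have sk: "s + k < n" and sab: "s + a + b + sum_list ys = n" using sm a1 b1 by (auto simp: s_def k_def)
  define P where "P = tword 0 xs"
  define Q where "Q = tword (s+a+b) ys"
  define X where "X = map (\<lambda>j. T j) [s+1..<s+a]"
  define X' where "X' = map (\<lambda>j. T (j + b)) [s+1..<s+a]"
  define Y where "Y = map (\<lambda>j. T (j + a)) [s+1..<s+b]"
  define Y' where "Y' = map (\<lambda>j. T j) [s+1..<s+b]"
  have e1: "tword 0 (xs@[a,b]@ys) = P @ X @ Y @ Q"
    unfolding P_def Q_def X_def Y_def mapT_shift tword_append by (simp add: s_def add_ac)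
  have e2: "tword 0 (xs@[b,a]@ys) = P @ Y' @ X' @ Q"
    unfolding P_def Q_def X'_def Y'_def mapT_shift tword_append by (simp add: s_def add_ac)
  have oW: "okw n W" unfolding W_def using okw_Zp sk by auto
  have oP: "okw n P" unfolding P_def using okw_tword[of 0 xs n] sab s_def by simp
  have oQ: "okw n Q" unfolding Q_def using okw_tword[of "s+a+b" ys n] sab by simp
  have oX: "okw n X" "okw n X'" "okw n Y" "okw n Y'" using sab a1 b1
    by (auto simp: X_def X'_def Y_def Y'_def okw_def)
  have WL: "T i \<in> set W \<Longrightarrow> s + 1 \<le> i \<and> i \<le> s + k" for i unfolding W_def using set_Zp by blast
  have tP: "TR n W P (map (\<lambda>x. x) P)"
  proof (rule TR_map[OF oP], intro ballI conjI)
    fix x assume x: "x \<in> set P"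
    then obtain j where j: "x = T j" "0 < j" "j < s" using tword_letters[of x 0 xs] unfolding P_def s_def by auto
    show "okw n [x]" using j sk by simp
    show "TR n W [x] [x]" unfolding j(1) by (rule farTR[OF oW]) (use j sk in \<open>auto dest!: WL\<close>)
  qed
  have tQ: "TR n W Q (map (\<lambda>x. x) Q)"
  proof (rule TR_map[OF oQ], intro ballI conjI)
    fix x assume x: "x \<in> set Q"
    then obtain j where j: "x = T j" "s + a + b < j" "j < n" using tword_letters[of x "s+a+b" ys] sab unfolding Q_def by auto
    show "okw n [x]" using j sk by simp
    show "TR n W [x] [x]" unfolding j(1) by (rule farTR[OF oW]) (use j sk k_def in \<open>auto dest!: WL\<close>)
  qed
  have tX: "TR n W X X'" unfolding X_def X'_def
  proof (rule TR_upt, intro ballI conjI)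
    fix j assume "j \<in> set [s+1..<s+a]"
    hence j: "s + 1 \<le> j" "j < s + a" by auto
    show "okw n [T j]" "okw n [T (j + b)]" using j sab b1 by auto
    show "TR n W [T j] [T (j + b)]" unfolding W_def by (rule powTR) (use j sk a1 b1 in \<open>simp_all add: k_def\<close>)
  qed
  have tY: "TR n W Y Y'" unfolding Y_def Y'_def
  proof (rule TR_upt, intro ballI conjI)
    fix j assume "j \<in> set [s+1..<s+b]"
    hence j: "s + 1 \<le> j" "j < s + b" by auto
    show "okw n [T (j + a)]" "okw n [T j]" using j sab a1 by auto
    have "TR n W [T (s + a + (j - s))] [T (s + (j - s))]" unfolding W_def
      by (rule Ycore) (use j sk a1 b1 in \<open>simp_all add: k_def\<close>)
    thus "TR n W [T (j + a)] [T j]" using j by (simp add: add_ac)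
  qed
  have tP': "TR n W P P" and tQ': "TR n W Q Q" using tP tQ by simp_all
  have h1: "TR n W (Y @ Q) (Y' @ Q)" using TR_app[OF oQ oX(4) tY tQ'] .
  have "okw n (Y @ Q)" using oX oQ by simp
  hence h2: "TR n W (X @ Y @ Q) (X' @ Y' @ Q)" using TR_app[OF _ oX(2) tX h1] by simp
  have "okw n (X @ Y @ Q)" using oX oQ by simp
  hence "TR n W (P @ X @ Y @ Q) (P @ X' @ Y' @ Q)" using TR_app[OF _ oP tP' h2] by simp
  hence 1: "PTE n (P @ X @ Y @ Q) (P @ X' @ Y' @ Q)"
    unfolding PTE_def by (rule TR_TE[OF oW, rotated 2]) (use oP oX oQ in auto)
  have pm: "PM n (X' @ Y') (Y' @ X')"
    by (rule commuteP) (use oX in \<open>auto simp: far_def X'_def Y'_def\<close>)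
  have 2: "PTE n (P @ X' @ Y' @ Q) (P @ Y' @ X' @ Q)"
    using PTE_of_PM[OF PM_ctx[OF pm oP oQ]] by simp
  show ?thesis unfolding e1 e2 using PTE_trans[OF 1 2] .
qed



lemma move: "(\<forall>g\<in>set (pre @ a # xs @ ys). 0 < g) \<Longrightarrow> sum_list (pre @ a # xs @ ys) = n \<Longrightarrow>
   PTE n (tword 0 (pre @ a # xs @ ys)) (tword 0 (pre @ xs @ a # ys))"
proof (induction xs arbitrary: pre)
  case Nil then show ?case by (simp add: PTE_refl)
next
  case (Cons x xs)
  have 1: "PTE n (tword 0 (pre @ a # x # xs @ ys)) (tword 0 (pre @ x # a # xs @ ys))"
    using swap[of pre a x "xs @ ys" n] Cons.prems by simp
  have 2: "PTE n (tword 0 (pre @ x # a # xs @ ys)) (tword 0 (pre @ x # xs @ a # ys))"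
    using Cons.IH[of "pre @ [x]"] Cons.prems by simp
  show ?case using PTE_trans[OF 1 2] by simp
qed

lemma perm_gen: "(\<forall>g\<in>set (pre @ \<gamma>). 0 < g) \<Longrightarrow> sum_list (pre @ \<gamma>) = n \<Longrightarrow> mset \<gamma> = mset \<mu> \<Longrightarrow>
   PTE n (tword 0 (pre @ \<gamma>)) (tword 0 (pre @ \<mu>))"
proof (induction \<gamma> arbitrary: \<mu> pre)
  case Nil then show ?case by (simp add: PTE_refl)
next
  case (Cons a \<gamma>)
  have "a \<in> set \<mu>" using Cons.prems(3) by (metis list.set_intros(1) set_mset_mset)
  then obtain xs ys where mu: "\<mu> = xs @ a # ys" by (meson split_list)
  have m: "mset \<gamma> = mset (xs @ ys)" using Cons.prems(3) mu by simp
  have 1: "PTE n (tword 0 (pre @ a # \<gamma>)) (tword 0 (pre @ a # xs @ ys))"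
    using Cons.IH[OF _ _ m, of "pre @ [a]"] Cons.prems by simp
  have s1: "set (pre @ a # xs @ ys) = set (pre @ a # \<gamma>)" using m by (metis mset_eq_setD set_append set_simps(2))
  have s2: "sum_list (pre @ a # xs @ ys) = sum_list (pre @ a # \<gamma>)" using m
    by (metis sum_list_append sum_list_simps(2) sum_mset_sum_list)
  have 2: "PTE n (tword 0 (pre @ a # xs @ ys)) (tword 0 (pre @ xs @ a # ys))"
    by (rule move) (use Cons.prems s1 s2 in auto)
  show ?case using PTE_trans[OF 1 2] mu by simp
qed

lemma len_tword_Cons: "length (tword a (g # xs)) = (g - 1) + length (tword (a + g) xs)"
  by simp

lemma no_odd_prefix: "(\<forall>xs ys. \<gamma> = xs @ ys \<longrightarrow> even (length (tword a xs))) \<Longrightarrow> (\<forall>g\<in>set \<gamma>. 0 < g) \<Longrightarrow> (\<forall>g\<in>set \<gamma>. odd g)"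
proof (induction \<gamma> arbitrary: a)
  case Nil then show ?case by simp
next
  case (Cons g \<gamma>)
  have "even (length (tword a [g]))" using Cons.prems(1)[rule_format, of "[g]" \<gamma>] by simp
  hence e1: "even (g - 1)" using len_tword_Cons[of a g "[]"] by simp
  have g0: "0 < g" using Cons.prems(2) by simp
  have og: "odd g"
  proof
    assume "even g"
    with g0 have "odd (g - 1)" by simp
    with e1 show False by simp
  qed
  have "\<forall>xs ys. \<gamma> = xs @ ys \<longrightarrow> even (length (tword (a + g) xs))"
  proof (intro allI impI)
    fix xs ys assume h: "\<gamma> = xs @ ys"
    have "even (length (tword a (g # xs)))" using Cons.prems(1)[rule_format, of "g # xs" ys] h by simp
    hence "even ((g - 1) + length (tword (a + g) xs))" by (simp only: len_tword_Cons)
    thus "even (length (tword (a + g) xs))" using e1 by simp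
  qed
  with Cons.IH[of "a + g"] Cons.prems(2) og show ?case by auto
qed

lemma even_case: assumes pos: "\<forall>g\<in>set \<gamma>. 0 < g" and sm: "sum_list \<gamma> = n"
  and ev: "even (n - length \<gamma>)" and ex: "\<exists>g\<in>set \<gamma>. even g"
  shows "in_commutator_H n (wd (tword 0 \<gamma>))"
proof -
  obtain xs ys where g: "\<gamma> = xs @ ys" and op: "odd (length (tword 0 xs))"
    using no_odd_prefix[OF _ pos, of 0] ex by blast
  define P where "P = tword 0 xs"
  define Q where "Q = tword (sum_list xs) ys"
  have e: "tword 0 \<gamma> = P @ Q" unfolding P_def Q_def g by (simp add: tword_append)
  have "length (tword 0 \<gamma>) + length \<gamma> = n" using tword_len[OF pos] sm by simp
  hence "even (length P + length Q)" using ev e by (metis add_diff_cancel_right' length_append)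
  hence oq: "odd (length Q)" using op P_def by simp
  have oP: "okw n P" unfolding P_def using okw_tword[of 0 xs n] sm g by simp
  have oQ: "okw n Q" unfolding Q_def using okw_tword[of "sum_list xs" ys n] sm g by simp
  have "far P Q" unfolding far_def P_def Q_def
    using tword_letters[of _ 0 xs] tword_letters[of _ "sum_list xs" ys] by fastforce
  from commute[OF oP oQ this] have "SR n (-1) (P @ Q) (Q @ P)" using op oq P_def by simp
  hence 1: "in_commutator_H n (wd (P @ Q) - fscale (-1) (wd (Q @ P)))" by (simp add: SR_def CH_I)
  have 2: "in_commutator_H n (wd (P @ Q) - fscale 1 (wd (Q @ P)))" using TE_rot[OF oP oQ] by (simp add: TE_def)
  have "in_commutator_H n (fscale (1/2) ((wd (P @ Q) - fscale (-1) (wd (Q @ P))) + (wd (P @ Q) - fscale 1 (wd (Q @ P)))))"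
    by (intro CH_scale CH_add 1 2)
  moreover have "fscale (1/2) ((wd (P @ Q) - fscale (-1) (wd (Q @ P))) + (wd (P @ Q) - fscale 1 (wd (Q @ P)))) = wd (P @ Q)"
    by (intro poly_mapping_eqI) (simp add: lookup_add lookup_minus)
  ultimately show ?thesis using e by simp
qed

theorem proposition7p1p1:
  fixes n :: nat and \<gamma> \<mu> :: "nat list"
  assumes "is_composition n \<gamma>"
    and "even (n - length \<gamma>)"
    and "mset \<mu> = mset \<gamma>" and "sorted_wrt (\<ge>) \<mu>"
  shows "((\<exists>m\<in>set \<mu>. even m) \<longrightarrow> in_commutator_H n (t_comp \<gamma>))
       \<and> ((\<forall>m\<in>set \<mu>. odd m) \<longrightarrow>
            (\<exists>\<epsilon>\<in>{1, -1}. in_commutator_H n (t_comp \<gamma> - fscale \<epsilon> (t_comp \<mu>))))"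
proof (intro conjI impI)
  have pos: "\<forall>g\<in>set \<gamma>. 0 < g" and sm: "sum_list \<gamma> = n" using assms(1) by (auto simp: is_composition_def)
  have st: "set \<mu> = set \<gamma>" using assms(3) by (metis set_mset_mset)
  {
    assume "\<exists>m\<in>set \<mu>. even m"
    thus "in_commutator_H n (t_comp \<gamma>)" unfolding t_comp_def using even_case[OF pos sm assms(2)] st by auto
  }
  {
    have "PTE n (tword 0 ([] @ \<gamma>)) (tword 0 ([] @ \<mu>))"
      by (rule perm_gen) (use pos sm assms(3) in auto)
    thus "\<exists>\<epsilon>\<in>{1, -1}. in_commutator_H n (t_comp \<gamma> - fscale \<epsilon> (t_comp \<mu>))"
      unfolding PTE_def TE_def t_comp_def by simp
  }
qed


end
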